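(* Let $\{X_t\}_{t\in\mathbb N^+}$ be a real-valued process adapted to a filtration $\{\mathcal F_t\}_{t\in\mathbb N}$ with $\mathcal F_0$ trivial, such that for all $t\in\mathbb N^+$, $\mathbb E[X_t\mid\mathcal F_{t-1}]=\mu$ (a constant) and $\mathbb E[(X_t-\mu)^2\mid\mathcal F_{t-1}]\le\sigma^2$. Let $\{\lambda_t\}_{t\in\mathbb N^+}$ be any predictable process and let $\phi$ be a Catoni-type influence function. Then the processes $$M^{\mathsf C}_t=\prod_{i=1}^t\exp\left(\phi(\lambda_i(X_i-\mu))-\lambda_i^2\sigma^2/2\right),\qquad N^{\mathsf C}_t=\prod_{i=1}^t\exp\left(-\phi(\lambda_i(X_i-\mu))-\lambda_i^2\sigma^2/2\right)$$ (with $M^{\mathsf C}_0=N^{\mathsf C}_0=1$) are nonnegative supermartingales with respect to $\{\mathcal F_t\}$.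
   Context: A process $\{\lambda_t\}$ is predictable if each $\lambda_t$ is $\mathcal F_{t-1}$-measurable. A function $\phi:\mathbb R\to\mathbb R$ is a Catoni-type influence function if it is increasing and $-\log(1-x+x^2/2)\le\phi(x)\le\log(1+x+x^2/2)$ for all $x\in\mathbb R$. *)

theory Defs
  imports "HOL-Probability.Probability"
begin

definition catoni_type :: "(real \<Rightarrow> real) \<Rightarrow> bool" where
  "catoni_type \<phi> \<longleftrightarrow> mono \<phi> \<and>
     (\<forall>x. - ln (1 - x + x\<^sup>2 / 2) \<le> \<phi> x \<and> \<phi> x \<le> ln (1 + x + x\<^sup>2 / 2))"

definition supermartingale ::
    "'a measure \<Rightarrow> (nat \<Rightarrow> 'a measure) \<Rightarrow> (nat \<Rightarrow> 'a \<Rightarrow> real) \<Rightarrow> bool" where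
  "supermartingale M F Y \<longleftrightarrow>
     (\<forall>t. Y t \<in> borel_measurable (F t) \<and> integrable M (Y t)) \<and>
     (\<forall>s t. s \<le> t \<longrightarrow> (AE x in M. real_cond_exp M (F s) (Y t) x \<le> Y s x))"

end

theory Submission
  imports Defs
begin

lemma exp_aux1: "(u::real) \<ge> 0 \<Longrightarrow> u * exp (- u / 2) \<le> 2"
proof -
  assume u: "u \<ge> 0"
  have "1 + u/2 \<le> exp (u/2)" by (rule exp_ge_add_one_self)
  hence "u \<le> 2 * exp (u/2)" by linarith
  hence "u * exp (- u/2) \<le> 2 * exp (u/2) * exp (-u/2)" by (simp add: mult_right_mono)
  also have "\<dots> = 2" by (simp add: exp_minus field_simps)
  finally show ?thesis by simp
qed

lemma exp_aux2: "exp (- (u::real) / 2) * (1 + u/2) \<le> 1"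
proof -
  have "1 + u/2 \<le> exp (u/2)" by (rule exp_ge_add_one_self)
  hence "exp (- u / 2) * (1 + u/2) \<le> exp (- u / 2) * exp (u/2)" by (simp add: mult_left_mono)
  also have "\<dots> = 1" by (simp add: exp_minus field_simps)
  finally show ?thesis .
qed

lemma abs_aux: "\<bar>y::real\<bar> \<le> 1 + y\<^sup>2"
proof -
  have "0 \<le> (\<bar>y\<bar> - 1)\<^sup>2" by simp
  also have "\<dots> = y\<^sup>2 - 2 * \<bar>y\<bar> + 1" by (simp add: power2_eq_square algebra_simps)
  finally show ?thesis by (simp add: add_increasing)
qed

lemma exp_split: "exp ((a::real) - u/2) = exp a * exp (- u / 2)"
  by (metis exp_add diff_conv_add_uminus minus_divide_left)

lemma core:
  fixes M G :: "'a measure" and P L X :: "'a \<Rightarrow> real" and \<psi> :: "real \<Rightarrow> real"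
  assumes sfs: "sigma_finite_subalgebra M G" and prob: "prob_space M"
  and Pm[measurable]: "P \<in> borel_measurable G" and Pnn: "\<And>x. x \<in> space M \<Longrightarrow> 0 \<le> P x"
  and Pi: "integrable M P"
  and Lm[measurable]: "L \<in> borel_measurable G"
  and Xm[measurable]: "X \<in> borel_measurable M" and Xi: "integrable M X"
  and mean: "AE x in M. real_cond_exp M G X x = \<mu>"
  and var: "AE x in M. nn_cond_exp M G (\<lambda>y. ennreal ((X y - \<mu>)\<^sup>2)) x \<le> ennreal (\<sigma>\<^sup>2)"
  and psim[measurable]: "\<psi> \<in> borel_measurable borel"
  and psib: "\<And>y. exp (\<psi> y) \<le> 1 + s*y + y\<^sup>2/2"
  shows "integrable M (\<lambda>x. P x * exp (\<psi> (L x * (X x - \<mu>)) - (L x)\<^sup>2*\<sigma>\<^sup>2/2)) \<and>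
     (\<integral>x. P x * exp (\<psi> (L x * (X x - \<mu>)) - (L x)\<^sup>2*\<sigma>\<^sup>2/2) \<partial>M) \<le> (\<integral>x. P x \<partial>M)"
proof -
  interpret prob_space M by (rule prob)
  have subalg: "subalgebra M G" using sfs sigma_finite_subalgebra.subalg by blast
  have PM[measurable]: "P \<in> borel_measurable M" by (rule measurable_from_subalg[OF subalg Pm])
  have LM[measurable]: "L \<in> borel_measurable M" by (rule measurable_from_subalg[OF subalg Lm])
  define W where "W = (\<lambda>x. P x * exp (- ((L x)\<^sup>2*\<sigma>\<^sup>2) / 2))"
  define D where "D = (\<lambda>x. X x - \<mu>)"
  have WG[measurable]: "W \<in> borel_measurable G" unfolding W_def by measurable
  have WM[measurable]: "W \<in> borel_measurable M" unfolding W_def by measurable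
  have DM[measurable]: "D \<in> borel_measurable M" unfolding D_def by measurable
  have Wnn: "\<And>x. x \<in> space M \<Longrightarrow> 0 \<le> W x" unfolding W_def using Pnn by simp
  have WleP: "\<And>x. x \<in> space M \<Longrightarrow> W x \<le> P x" unfolding W_def using Pnn
    by (simp add: mult_left_le)
  have Wi: "integrable M W"
    by (rule Bochner_Integration.integrable_bound[OF Pi WM]) (auto intro!: AE_I2 simp: Wnn WleP Pnn)
  have key: "\<And>x. x \<in> space M \<Longrightarrow> W x * (L x)\<^sup>2 * \<sigma>\<^sup>2 \<le> 2 * P x"
  proof -
    fix x assume x: "x \<in> space M"
    have "W x * (L x)\<^sup>2 * \<sigma>\<^sup>2 = P x * (((L x)\<^sup>2*\<sigma>\<^sup>2) * exp (- ((L x)\<^sup>2*\<sigma>\<^sup>2) / 2))"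
      unfolding W_def by (simp add: algebra_simps)
    also have "\<dots> \<le> P x * 2" by (rule mult_left_mono[OF exp_aux1 Pnn[OF x]]) simp
    finally show "W x * (L x)\<^sup>2 * \<sigma>\<^sup>2 \<le> 2 * P x" by simp
  qed
  have int2: "integrable M (\<lambda>x. W x * (L x)\<^sup>2 * \<sigma>\<^sup>2)"
    by (rule Bochner_Integration.integrable_bound[of M "\<lambda>x. 2 * P x"]) (auto intro!: AE_I2 simp: Pi Wnn key Pnn)
  have nnD2: "(\<integral>\<^sup>+x. ennreal (W x * (L x)\<^sup>2 * (D x)\<^sup>2) \<partial>M) \<le> (\<integral>\<^sup>+x. ennreal (W x * (L x)\<^sup>2 * \<sigma>\<^sup>2) \<partial>M)"
  proof -
    have "(\<integral>\<^sup>+x. ennreal (W x * (L x)\<^sup>2 * (D x)\<^sup>2) \<partial>M) = (\<integral>\<^sup>+x. ennreal (W x * (L x)\<^sup>2) * ennreal ((X x - \<mu>)\<^sup>2) \<partial>M)"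
      by (rule nn_integral_cong) (simp add: D_def Wnn ennreal_mult)
    also have "\<dots> = (\<integral>\<^sup>+x. ennreal (W x * (L x)\<^sup>2) * nn_cond_exp M G (\<lambda>y. ennreal ((X y - \<mu>)\<^sup>2)) x \<partial>M)"
      by (rule sigma_finite_subalgebra.nn_cond_exp_intg[OF sfs, symmetric]) measurable
    also have "\<dots> \<le> (\<integral>\<^sup>+x. ennreal (W x * (L x)\<^sup>2) * ennreal (\<sigma>\<^sup>2) \<partial>M)"
      proof (rule nn_integral_mono_AE)
      show "AE x in M. ennreal (W x * (L x)\<^sup>2) * nn_cond_exp M G (\<lambda>y. ennreal ((X y - \<mu>)\<^sup>2)) x \<le> ennreal (W x * (L x)\<^sup>2) * ennreal (\<sigma>\<^sup>2)"
        by (rule eventually_mono[OF var]) (rule mult_left_mono, assumption, simp)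
    qed
    also have "\<dots> = (\<integral>\<^sup>+x. ennreal (W x * (L x)\<^sup>2 * \<sigma>\<^sup>2) \<partial>M)"
      by (rule nn_integral_cong) (simp add: Wnn ennreal_mult)
    finally show ?thesis .
  qed
  have fin2: "(\<integral>\<^sup>+x. ennreal (W x * (L x)\<^sup>2 * \<sigma>\<^sup>2) \<partial>M) < \<infinity>"
  proof -
    have "(\<integral>\<^sup>+x. ennreal (norm (W x * (L x)\<^sup>2 * \<sigma>\<^sup>2)) \<partial>M) < \<infinity>"
      using int2 unfolding integrable_iff_bounded by blast
    moreover have "(\<integral>\<^sup>+x. ennreal (norm (W x * (L x)\<^sup>2 * \<sigma>\<^sup>2)) \<partial>M) = (\<integral>\<^sup>+x. ennreal (W x * (L x)\<^sup>2 * \<sigma>\<^sup>2) \<partial>M)"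
      by (rule nn_integral_cong) (simp add: Wnn)
    ultimately show ?thesis by simp
  qed
  have int1: "integrable M (\<lambda>x. W x * (L x)\<^sup>2 * (D x)\<^sup>2)"
  proof (rule integrableI_bounded)
    show "(\<lambda>x. W x * (L x)\<^sup>2 * (D x)\<^sup>2) \<in> borel_measurable M" by measurable
    have "(\<integral>\<^sup>+x. ennreal (norm (W x * (L x)\<^sup>2 * (D x)\<^sup>2)) \<partial>M) = (\<integral>\<^sup>+x. ennreal (W x * (L x)\<^sup>2 * (D x)\<^sup>2) \<partial>M)"
      by (rule nn_integral_cong) (simp add: Wnn)
    then show "(\<integral>\<^sup>+x. ennreal (norm (W x * (L x)\<^sup>2 * (D x)\<^sup>2)) \<partial>M) < \<infinity>"
      using nnD2 fin2 by simp
  qed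
  have ineq1: "(\<integral>x. W x * (L x)\<^sup>2 * (D x)\<^sup>2 \<partial>M) \<le> (\<integral>x. W x * (L x)\<^sup>2 * \<sigma>\<^sup>2 \<partial>M)"
  proof -
    have "(\<integral>x. W x * (L x)\<^sup>2 * (D x)\<^sup>2 \<partial>M) = enn2real (\<integral>\<^sup>+x. ennreal (W x * (L x)\<^sup>2 * (D x)\<^sup>2) \<partial>M)"
      by (rule integral_eq_nn_integral) (auto intro!: AE_I2 simp: Wnn)
    also have "\<dots> \<le> enn2real (\<integral>\<^sup>+x. ennreal (W x * (L x)\<^sup>2 * \<sigma>\<^sup>2) \<partial>M)"
      using nnD2 fin2 by (intro enn2real_mono) (auto simp: infinity_ennreal_def)
    also have "\<dots> = (\<integral>x. W x * (L x)\<^sup>2 * \<sigma>\<^sup>2 \<partial>M)"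
      by (rule integral_eq_nn_integral[symmetric]) (auto intro!: AE_I2 simp: Wnn)
    finally show ?thesis .
  qed
  have int3: "integrable M (\<lambda>x. W x * L x * D x)"
  proof (rule Bochner_Integration.integrable_bound[of M "\<lambda>x. W x + W x * (L x)\<^sup>2 * (D x)\<^sup>2"])
    show "integrable M (\<lambda>x. W x + W x * (L x)\<^sup>2 * (D x)\<^sup>2)" using Wi int1 by simp
    show "(\<lambda>x. W x * L x * D x) \<in> borel_measurable M" by measurable
    show "AE x in M. norm (W x * L x * D x) \<le> norm (W x + W x * (L x)\<^sup>2 * (D x)\<^sup>2)"
    proof (rule AE_I2)
      fix x assume x: "x \<in> space M"
      have a: "\<bar>L x * D x\<bar> \<le> 1 + (L x * D x)\<^sup>2"
        by (rule abs_aux)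
      have "norm (W x * L x * D x) = W x * \<bar>L x * D x\<bar>" using Wnn[OF x] by (simp add: abs_mult)
      also have "\<dots> \<le> W x * (1 + (L x * D x)\<^sup>2)" by (rule mult_left_mono[OF a Wnn[OF x]])
      also have "\<dots> = norm (W x + W x * (L x)\<^sup>2 * (D x)\<^sup>2)" using Wnn[OF x]
        by (simp add: algebra_simps power_mult_distrib)
      finally show "norm (W x * L x * D x) \<le> norm (W x + W x * (L x)\<^sup>2 * (D x)\<^sup>2)" .
    qed
  qed
  have zero: "(\<integral>x. W x * L x * D x \<partial>M) = 0"
  proof -
    have cD: "AE x in M. real_cond_exp M G D x = 0"
    proof -
      have "AE x in M. real_cond_exp M G (\<lambda>x. X x - (\<lambda>_. \<mu>) x) x = real_cond_exp M G X x - real_cond_exp M G (\<lambda>_. \<mu>) x"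
        by (rule sigma_finite_subalgebra.real_cond_exp_diff[OF sfs]) (auto simp: Xi)
      moreover have "AE x in M. real_cond_exp M G (\<lambda>_. \<mu>) x = \<mu>"
        by (rule sigma_finite_subalgebra.real_cond_exp_F_meas[OF sfs]) auto
      ultimately show ?thesis using mean unfolding D_def by auto
    qed
    have "(\<integral>x. W x * L x * D x \<partial>M) = (\<integral>x. (W x * L x) * real_cond_exp M G D x \<partial>M)"
      by (rule sigma_finite_subalgebra.real_cond_exp_intg(2)[OF sfs, symmetric]) (use int3 in \<open>simp_all add: mult.assoc\<close>)
    also have "\<dots> = (\<integral>x. 0 \<partial>M)"
      by (rule integral_cong_AE) (use cD in \<open>auto\<close>)
    finally show ?thesis by simp
  qed
  define R where "R = (\<lambda>x. W x + s * (W x * L x * D x) + (W x * (L x)\<^sup>2 * (D x)\<^sup>2) / 2)"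
  have Ri: "integrable M R" unfolding R_def using Wi int1 int3 by simp
  have bnd: "\<And>x. x \<in> space M \<Longrightarrow> P x * exp (\<psi> (L x * (X x - \<mu>)) - (L x)\<^sup>2*\<sigma>\<^sup>2/2) \<le> R x"
  proof -
    fix x assume x: "x \<in> space M"
    have "P x * exp (\<psi> (L x * (X x - \<mu>)) - (L x)\<^sup>2*\<sigma>\<^sup>2/2) = W x * exp (\<psi> (L x * D x))"
      unfolding W_def D_def by (simp add: exp_split)
    also have "\<dots> \<le> W x * (1 + s * (L x * D x) + (L x * D x)\<^sup>2/2)"
      by (rule mult_left_mono[OF psib Wnn[OF x]])
    also have "\<dots> = R x" unfolding R_def by (simp add: algebra_simps power_mult_distrib)
    finally show "P x * exp (\<psi> (L x * (X x - \<mu>)) - (L x)\<^sup>2*\<sigma>\<^sup>2/2) \<le> R x" .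
  qed
  have fi: "integrable M (\<lambda>x. P x * exp (\<psi> (L x * (X x - \<mu>)) - (L x)\<^sup>2*\<sigma>\<^sup>2/2))"
  proof (rule Bochner_Integration.integrable_bound[OF Ri])
    show "(\<lambda>x. P x * exp (\<psi> (L x * (X x - \<mu>)) - (L x)\<^sup>2*\<sigma>\<^sup>2/2)) \<in> borel_measurable M" by measurable
    show "AE x in M. norm (P x * exp (\<psi> (L x * (X x - \<mu>)) - (L x)\<^sup>2*\<sigma>\<^sup>2/2)) \<le> norm (R x)"
    proof (rule AE_I2)
      fix x assume x: "x \<in> space M"
      have "0 \<le> P x * exp (\<psi> (L x * (X x - \<mu>)) - (L x)\<^sup>2*\<sigma>\<^sup>2/2)" using Pnn[OF x] by simp
      then show "norm (P x * exp (\<psi> (L x * (X x - \<mu>)) - (L x)\<^sup>2*\<sigma>\<^sup>2/2)) \<le> norm (R x)"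
        using bnd[OF x] by simp
    qed
  qed
  have "(\<integral>x. P x * exp (\<psi> (L x * (X x - \<mu>)) - (L x)\<^sup>2*\<sigma>\<^sup>2/2) \<partial>M) \<le> (\<integral>x. R x \<partial>M)"
    by (rule integral_mono[OF fi Ri bnd])
  also have "(\<integral>x. R x \<partial>M) = (\<integral>x. W x \<partial>M) + s * (\<integral>x. W x * L x * D x \<partial>M) + (\<integral>x. W x * (L x)\<^sup>2 * (D x)\<^sup>2 \<partial>M) / 2"
    unfolding R_def using Wi int1 int3 by simp
  also have "\<dots> \<le> (\<integral>x. W x \<partial>M) + (\<integral>x. W x * (L x)\<^sup>2 * \<sigma>\<^sup>2 \<partial>M) / 2"
    using zero ineq1 by simp
  also have "\<dots> = (\<integral>x. W x + W x * (L x)\<^sup>2 * \<sigma>\<^sup>2 / 2 \<partial>M)"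
    using Wi int2 by simp
  also have "\<dots> \<le> (\<integral>x. P x \<partial>M)"
  proof (rule integral_mono)
    show "integrable M (\<lambda>x. W x + W x * (L x)\<^sup>2 * \<sigma>\<^sup>2 / 2)" using Wi int2 by simp
    show "integrable M P" by (rule Pi)
    fix x assume x: "x \<in> space M"
    have "W x + W x * (L x)\<^sup>2 * \<sigma>\<^sup>2 / 2 = P x * (exp (- ((L x)\<^sup>2*\<sigma>\<^sup>2) / 2) * (1 + ((L x)\<^sup>2*\<sigma>\<^sup>2)/2))"
      unfolding W_def by (simp add: algebra_simps)
    also have "\<dots> \<le> P x * 1" by (rule mult_left_mono[OF exp_aux2 Pnn[OF x]])
    finally show "W x + W x * (L x)\<^sup>2 * \<sigma>\<^sup>2 / 2 \<le> P x" by simp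
  qed
  finally show ?thesis using fi by simp
qed


lemma ae_le_from_int:
  fixes f g :: "'a \<Rightarrow> real"
  assumes sfs: "sigma_finite_subalgebra M G" and fi: "integrable M f" and gi: "integrable M g"
    and gG[measurable]: "g \<in> borel_measurable G"
    and le: "\<And>A. A \<in> sets G \<Longrightarrow> (\<integral>x. indicator A x * f x \<partial>M) \<le> (\<integral>x. indicator A x * g x \<partial>M)"
  shows "AE x in M. real_cond_exp M G f x \<le> g x"
proof -
  have subalg: "subalgebra M G" using sfs sigma_finite_subalgebra.subalg by blast
  define h where "h = real_cond_exp M G f"
  have hG[measurable]: "h \<in> borel_measurable G" unfolding h_def by (rule borel_measurable_cond_exp)
  have hi: "integrable M h" unfolding h_def by (rule sigma_finite_subalgebra.real_cond_exp_int(1)[OF sfs fi])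
  have fM[measurable]: "f \<in> borel_measurable M" using fi by auto
  define A where "A = {x \<in> space G. g x < h x}"
  have AG[measurable]: "A \<in> sets G" unfolding A_def by measurable
  have AM[measurable]: "A \<in> sets M" using AG subalg unfolding subalgebra_def by auto
  have spG: "space G = space M" using subalg unfolding subalgebra_def by auto
  have iAf: "integrable M (\<lambda>x. indicator A x * f x)" using integrable_mult_indicator[OF AM fi] by simp
  have iAg: "integrable M (\<lambda>x. indicator A x * g x)" using integrable_mult_indicator[OF AM gi] by simp
  have iAh: "integrable M (\<lambda>x. indicator A x * h x)" using integrable_mult_indicator[OF AM hi] by simp
  have "(\<integral>x. indicator A x * h x \<partial>M) = (\<integral>x. indicator A x * f x \<partial>M)"
    unfolding h_def by (rule sigma_finite_subalgebra.real_cond_exp_intg(2)[OF sfs iAf]) measurable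
  define k where "k = (\<lambda>x. indicator A x * h x - indicator A x * g x)"
  have ki: "integrable M k" unfolding k_def using iAh iAg by simp
  have knn: "\<And>x. 0 \<le> k x" unfolding k_def A_def by (auto split: split_indicator)
  have "(\<integral>x. k x \<partial>M) = (\<integral>x. indicator A x * h x \<partial>M) - (\<integral>x. indicator A x * g x \<partial>M)"
    unfolding k_def using iAh iAg by simp
  also have "\<dots> \<le> 0" using le[OF AG] \<open>(\<integral>x. indicator A x * h x \<partial>M) = _\<close> by simp
  finally have "(\<integral>x. k x \<partial>M) = 0" using integral_nonneg_AE[of k M] knn by (simp add: AE_I2 antisym)
  then have "AE x in M. k x = 0" using integral_nonneg_eq_0_iff_AE[OF ki] knn by simp
  then show ?thesis
  proof (rule AE_mp, intro AE_I2 impI)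
    fix x assume x: "x \<in> space M" and k0: "k x = 0"
    show "real_cond_exp M G f x \<le> g x"
    proof (rule ccontr)
      assume "\<not> real_cond_exp M G f x \<le> g x"
      then have "x \<in> A" unfolding A_def h_def using x spG by auto
      then have "k x = h x - g x" unfolding k_def by simp
      then show False using k0 \<open>x \<in> A\<close> unfolding A_def by auto
    qed
  qed
qed

lemma main:
  fixes M :: "'a measure" and F :: "nat \<Rightarrow> 'a measure"
    and X lam :: "nat \<Rightarrow> 'a \<Rightarrow> real" and \<mu> \<sigma> s :: real and \<psi> :: "real \<Rightarrow> real"
  assumes prob: "prob_space M"
    and sub: "\<And>t. subalgebra M (F t)"
    and mono_F: "\<And>s t. s \<le> t \<Longrightarrow> sets (F s) \<subseteq> sets (F t)"
    and adapted: "\<And>t. t \<ge> 1 \<Longrightarrow> X t \<in> borel_measurable (F t)"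
    and integ: "\<And>t. t \<ge> 1 \<Longrightarrow> integrable M (X t)"
    and mean: "\<And>t. t \<ge> 1 \<Longrightarrow> AE x in M. real_cond_exp M (F (t - 1)) (X t) x = \<mu>"
    and var: "\<And>t. t \<ge> 1 \<Longrightarrow>
        AE x in M. nn_cond_exp M (F (t - 1)) (\<lambda>y. ennreal ((X t y - \<mu>)\<^sup>2)) x \<le> ennreal (\<sigma>\<^sup>2)"
    and predictable: "\<And>t. t \<ge> 1 \<Longrightarrow> lam t \<in> borel_measurable (F (t - 1))"
    and psim[measurable]: "\<psi> \<in> borel_measurable borel"
    and psib: "\<And>y. exp (\<psi> y) \<le> 1 + s*y + y\<^sup>2/2"
  shows "(\<forall>t. \<forall>x\<in>space M.
            0 \<le> (\<Prod>i\<in>{1..t}. exp (\<psi> (lam i x * (X i x - \<mu>)) - (lam i x)\<^sup>2 * \<sigma>\<^sup>2 / 2))) \<and>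
         supermartingale M F
           (\<lambda>t x. \<Prod>i\<in>{1..t}. exp (\<psi> (lam i x * (X i x - \<mu>)) - (lam i x)\<^sup>2 * \<sigma>\<^sup>2 / 2))"
proof -
  interpret prob_space M by (rule prob)
  define g where "g = (\<lambda>i x. exp (\<psi> (lam i x * (X i x - \<mu>)) - (lam i x)\<^sup>2 * \<sigma>\<^sup>2 / 2))"
  define Y where "Y = (\<lambda>t x. \<Prod>i\<in>{1..t}. g i x)"
  have sfs: "\<And>t. sigma_finite_subalgebra M (F t)"
  proof -
    fix t
    have "finite_measure_subalgebra M (F t)"
      by (intro finite_measure_subalgebra.intro finite_measure_subalgebra_axioms.intro sub finite_measure_axioms)
    then show "sigma_finite_subalgebra M (F t)" by (rule finite_measure_subalgebra_is_sigma_finite)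
  qed
  have subF: "\<And>i t. i \<le> t \<Longrightarrow> subalgebra (F t) (F i)"
    using sub mono_F unfolding subalgebra_def by auto
  have gm: "\<And>i t. 1 \<le> i \<Longrightarrow> i \<le> t \<Longrightarrow> g i \<in> borel_measurable (F t)"
  proof -
    fix i t :: nat assume i: "1 \<le> i" "i \<le> t"
    have [measurable]: "X i \<in> borel_measurable (F t)"
      by (rule measurable_from_subalg[OF subF adapted]) (use i in auto)
    have [measurable]: "lam i \<in> borel_measurable (F t)"
      by (rule measurable_from_subalg[OF subF predictable]) (use i in auto)
    show "g i \<in> borel_measurable (F t)" unfolding g_def by measurable
  qed
  have Ym: "\<And>t. Y t \<in> borel_measurable (F t)"
    unfolding Y_def by (rule borel_measurable_prod) (use gm in auto)
  have YM: "\<And>t. Y t \<in> borel_measurable M"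
    by (rule measurable_from_subalg[OF sub Ym])
  have Ynn: "\<And>t x. 0 \<le> Y t x" unfolding Y_def g_def by (simp add: prod_nonneg)
  have YSuc: "\<And>t x. Y (Suc t) x = Y t x * g (Suc t) x" unfolding Y_def by simp
  have step: "integrable M (\<lambda>x. P x * g (Suc t) x) \<and> (\<integral>x. P x * g (Suc t) x \<partial>M) \<le> (\<integral>x. P x \<partial>M)"
    if Pm: "P \<in> borel_measurable (F t)" and Pnn: "\<And>x. x \<in> space M \<Longrightarrow> 0 \<le> P x"
      and Pi: "integrable M P" for P t
  proof -
    have XM: "X (Suc t) \<in> borel_measurable M"
      by (rule measurable_from_subalg[OF sub adapted]) simp
    show ?thesis unfolding g_def
      by (rule core[OF sfs prob Pm Pnn Pi _ XM integ _ _ psim psib])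
        (use predictable[of "Suc t"] mean[of "Suc t"] var[of "Suc t"] in simp_all)
  qed
  have Yi: "\<And>t. integrable M (Y t)"
  proof -
    fix t show "integrable M (Y t)"
    proof (induction t)
      case 0
      then show ?case unfolding Y_def by simp
    next
      case (Suc t)
      have "integrable M (\<lambda>x. Y t x * g (Suc t) x)"
        using step[OF Ym _ Suc] Ynn by blast
      then show ?case by (simp add: YSuc[abs_def])
    qed
  qed
  have one: "(\<integral>x. indicator A x * Y (Suc t) x \<partial>M) \<le> (\<integral>x. indicator A x * Y t x \<partial>M)"
    if A: "A \<in> sets (F t)" for A t
  proof -
    have AM: "A \<in> sets M" using A sub unfolding subalgebra_def by auto
    have [measurable]: "Y t \<in> borel_measurable (F t)" by (rule Ym)
    have "(\<lambda>x. indicator A x * Y t x) \<in> borel_measurable (F t)" using A by measurable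
    moreover have "integrable M (\<lambda>x. indicator A x * Y t x)"
      using integrable_mult_indicator[OF AM Yi] by simp
    ultimately have "(\<integral>x. (indicator A x * Y t x) * g (Suc t) x \<partial>M) \<le> (\<integral>x. indicator A x * Y t x \<partial>M)"
      using step[of "\<lambda>x. indicator A x * Y t x" t] Ynn by simp
    then show ?thesis by (simp add: YSuc mult.assoc)
  qed
  have chain: "(\<integral>x. indicator A x * Y t x \<partial>M) \<le> (\<integral>x. indicator A x * Y s x \<partial>M)"
    if st: "s \<le> t" and A: "A \<in> sets (F s)" for s t A
    using st
  proof (induction t rule: dec_induct)
    case base
    then show ?case by simp
  next
    case (step n)
    have "A \<in> sets (F n)" using mono_F[OF step(1)] A by auto
    then show ?case using one[of A n] step(3) by linarith
  qed
  have sm: "supermartingale M F Y"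
    unfolding supermartingale_def
  proof (intro conjI allI impI)
    fix t show "Y t \<in> borel_measurable (F t)" by (rule Ym)
    show "integrable M (Y t)" by (rule Yi)
  next
    fix s t :: nat assume "s \<le> t"
    then show "AE x in M. real_cond_exp M (F s) (Y t) x \<le> Y s x"
      by (intro ae_le_from_int[OF sfs Yi Yi Ym] chain)
  qed
  show ?thesis using sm Ynn unfolding Y_def g_def by simp
qed


lemma quad_pos: "0 < 1 + s * (y::real) + y\<^sup>2 / 2" if "s = 1 \<or> s = -1"
proof -
  have "0 < (1 + s*y)\<^sup>2 + 1" by (simp add: add_nonneg_pos)
  also have "(1 + s*y)\<^sup>2 + 1 = 2 * (1 + s * y + y\<^sup>2 / 2)"
    using that by (auto simp: power2_eq_square algebra_simps)
  finally show ?thesis by simp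
qed

theorem lemma6:
  fixes M :: "'a measure" and F :: "nat \<Rightarrow> 'a measure"
    and X lam :: "nat \<Rightarrow> 'a \<Rightarrow> real" and \<mu> \<sigma> :: real and \<phi> :: "real \<Rightarrow> real"
  assumes prob: "prob_space M"
    and sub: "\<And>t. subalgebra M (F t)"
    and mono_F: "\<And>s t. s \<le> t \<Longrightarrow> sets (F s) \<subseteq> sets (F t)"
    and triv: "sets (F 0) = {{}, space M}"
    and adapted: "\<And>t. t \<ge> 1 \<Longrightarrow> X t \<in> borel_measurable (F t)"
    and integ: "\<And>t. t \<ge> 1 \<Longrightarrow> integrable M (X t)"
    and mean: "\<And>t. t \<ge> 1 \<Longrightarrow> AE x in M. real_cond_exp M (F (t - 1)) (X t) x = \<mu>"
    and var: "\<And>t. t \<ge> 1 \<Longrightarrow>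
        AE x in M. nn_cond_exp M (F (t - 1)) (\<lambda>y. ennreal ((X t y - \<mu>)\<^sup>2)) x \<le> ennreal (\<sigma>\<^sup>2)"
    and predictable: "\<And>t. t \<ge> 1 \<Longrightarrow> lam t \<in> borel_measurable (F (t - 1))"
    and catoni: "catoni_type \<phi>"
  shows "(\<forall>t. \<forall>x\<in>space M.
            0 \<le> (\<Prod>i\<in>{1..t}. exp (\<phi> (lam i x * (X i x - \<mu>)) - (lam i x)\<^sup>2 * \<sigma>\<^sup>2 / 2))) \<and>
         supermartingale M F
           (\<lambda>t x. \<Prod>i\<in>{1..t}. exp (\<phi> (lam i x * (X i x - \<mu>)) - (lam i x)\<^sup>2 * \<sigma>\<^sup>2 / 2)) \<and>
         (\<forall>t. \<forall>x\<in>space M.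
            0 \<le> (\<Prod>i\<in>{1..t}. exp (- \<phi> (lam i x * (X i x - \<mu>)) - (lam i x)\<^sup>2 * \<sigma>\<^sup>2 / 2))) \<and>
         supermartingale M F
           (\<lambda>t x. \<Prod>i\<in>{1..t}. exp (- \<phi> (lam i x * (X i x - \<mu>)) - (lam i x)\<^sup>2 * \<sigma>\<^sup>2 / 2))"
proof -
  have monophi: "mono \<phi>" and lo: "\<And>y. - ln (1 - y + y\<^sup>2 / 2) \<le> \<phi> y"
    and hi: "\<And>y. \<phi> y \<le> ln (1 + y + y\<^sup>2 / 2)"
    using catoni unfolding catoni_type_def by auto
  have phim[measurable]: "\<phi> \<in> borel_measurable borel" by (rule borel_measurable_mono[OF monophi])
  have nphim: "(\<lambda>y. - \<phi> y) \<in> borel_measurable borel" by measurable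
  have b1: "exp (\<phi> y) \<le> 1 + 1 * y + y\<^sup>2 / 2" for y
  proof -
    have q: "0 < 1 + 1 * y + y\<^sup>2 / 2" by (rule quad_pos) simp
    have "exp (\<phi> y) \<le> exp (ln (1 + y + y\<^sup>2 / 2))" using hi[of y] by simp
    also have "\<dots> = 1 + 1 * y + y\<^sup>2 / 2" using q by simp
    finally show ?thesis .
  qed
  have b2: "exp (- \<phi> y) \<le> 1 + (-1) * y + y\<^sup>2 / 2" for y
  proof -
    have q: "0 < 1 + (-1) * y + y\<^sup>2 / 2" by (rule quad_pos) simp
    have "exp (- \<phi> y) \<le> exp (ln (1 - y + y\<^sup>2 / 2))" using lo[of y] by simp
    also have "\<dots> = 1 + (-1) * y + y\<^sup>2 / 2" using q by simp
    finally show ?thesis .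
  qed
  have A: "(\<forall>t. \<forall>x\<in>space M.
            0 \<le> (\<Prod>i\<in>{1..t}. exp (\<phi> (lam i x * (X i x - \<mu>)) - (lam i x)\<^sup>2 * \<sigma>\<^sup>2 / 2))) \<and>
         supermartingale M F
           (\<lambda>t x. \<Prod>i\<in>{1..t}. exp (\<phi> (lam i x * (X i x - \<mu>)) - (lam i x)\<^sup>2 * \<sigma>\<^sup>2 / 2))"
    by (rule main[where \<psi>=\<phi> and s=1 and M=M and F=F and X=X and lam=lam and \<mu>=\<mu> and \<sigma>=\<sigma>, OF prob sub mono_F adapted integ mean var predictable phim b1])
  have B: "(\<forall>t. \<forall>x\<in>space M.
            0 \<le> (\<Prod>i\<in>{1..t}. exp (- \<phi> (lam i x * (X i x - \<mu>)) - (lam i x)\<^sup>2 * \<sigma>\<^sup>2 / 2))) \<and>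
         supermartingale M F
           (\<lambda>t x. \<Prod>i\<in>{1..t}. exp (- \<phi> (lam i x * (X i x - \<mu>)) - (lam i x)\<^sup>2 * \<sigma>\<^sup>2 / 2))"
    using main[where \<psi>="\<lambda>y. - \<phi> y" and s="-1" and M=M and F=F and X=X and lam=lam and \<mu>=\<mu> and \<sigma>=\<sigma>, OF prob sub mono_F adapted integ mean var predictable nphim b2] by simp
  show ?thesis using A B by blast
qed

end
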